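(* Consider the following market for a sin good subject to a per-unit tax $t>0$. There are $N$ firms $k=1,\dots,N$ producing at common constant marginal cost $m$ and competing à la Bertrand–Nash. Each firm $k$ simultaneously chooses a salient posted price $p^s_k$ and a shrouded tax surcharge $\tau_k\in\{0,t\}$ (it "shrouds" if $\tau_k=t$); its effective consumer price is $p_k=p^s_k+\tau_k$ and its producer price is $p_k-t$. A fraction $\lambda$ of consumers, with $0<\lambda<1$, are attentive: they observe all effective prices and all shrouding decisions, and buying from a shrouding firm entails a fixed disutility $s\ge 0$. The remaining fraction $1-\lambda$ are inattentive: they observe posted prices but perceive the surcharge of a shrouding firm as $\theta t$ with $\theta<1$; demand of inattentive consumers is split equally among the firms with the lowest posted price. Firms cannot price-discriminate between consumer types. If $N\ge 4$, there exists an asymmetric pure-strategy equilibrium with two market segments: (i) at least two firms shroud taxes, choosing $p^s_k=m$ and $\tau_k=t$, and serve all inattentive consumers; and (ii) at least two firms do not shroud taxes, choosing $p^s_k=m+t$ and $\tau_k=0$, and serve all attentive consumers.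
   Context: Consumers otherwise behave as cost-minimizing buyers of a homogeneous good given their (perceived) prices. *)

theory Defs
  imports Complex_Main
begin

text \<open>Firms are indexed by 0,...,N-1. A strategy profile is given by
  posted (salient) prices ps :: nat => real and shrouding decisions sh :: nat => bool
  (sh k means tau_k = t, otherwise tau_k = 0). Consumer mass is normalised to 1.\<close>

definition surcharge :: "real \<Rightarrow> (nat \<Rightarrow> bool) \<Rightarrow> nat \<Rightarrow> real" where
  "surcharge t sh k = (if sh k then t else 0)"

definition eff_price :: "real \<Rightarrow> (nat \<Rightarrow> real) \<Rightarrow> (nat \<Rightarrow> bool) \<Rightarrow> nat \<Rightarrow> real" where
  "eff_price t ps sh k = ps k + surcharge t sh k"

definition att_cost :: "real \<Rightarrow> real \<Rightarrow> (nat \<Rightarrow> real) \<Rightarrow> (nat \<Rightarrow> bool) \<Rightarrow> nat \<Rightarrow> real" where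
  "att_cost t s ps sh k = eff_price t ps sh k + (if sh k then s else 0)"

definition inatt_cost :: "real \<Rightarrow> real \<Rightarrow> (nat \<Rightarrow> real) \<Rightarrow> (nat \<Rightarrow> bool) \<Rightarrow> nat \<Rightarrow> real" where
  "inatt_cost t th ps sh k = ps k + (if sh k then th * t else 0)"

definition argmins :: "nat \<Rightarrow> (nat \<Rightarrow> real) \<Rightarrow> nat set" where
  "argmins N f = {k. k < N \<and> (\<forall>j<N. f k \<le> f j)}"

text \<open>Firms chosen by attentive consumers: cost minimisers; an attentive consumer indifferent
  between a shrouding and a non-shrouding firm buys from a non-shrouding one.\<close>
definition att_set :: "nat \<Rightarrow> real \<Rightarrow> real \<Rightarrow> (nat \<Rightarrow> real) \<Rightarrow> (nat \<Rightarrow> bool) \<Rightarrow> nat set" where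
  "att_set N t s ps sh =
     (let M = argmins N (att_cost t s ps sh) in
      if (\<exists>k\<in>M. \<not> sh k) then {k\<in>M. \<not> sh k} else M)"

definition inatt_set :: "nat \<Rightarrow> real \<Rightarrow> real \<Rightarrow> (nat \<Rightarrow> real) \<Rightarrow> (nat \<Rightarrow> bool) \<Rightarrow> nat set" where
  "inatt_set N t th ps sh = argmins N (inatt_cost t th ps sh)"

definition dem_att :: "nat \<Rightarrow> real \<Rightarrow> real \<Rightarrow> real \<Rightarrow> (nat \<Rightarrow> real) \<Rightarrow> (nat \<Rightarrow> bool) \<Rightarrow> nat \<Rightarrow> real" where
  "dem_att N t s lam ps sh k =
     (if k \<in> att_set N t s ps sh then lam / real (card (att_set N t s ps sh)) else 0)"

definition dem_inatt :: "nat \<Rightarrow> real \<Rightarrow> real \<Rightarrow> real \<Rightarrow> (nat \<Rightarrow> real) \<Rightarrow> (nat \<Rightarrow> bool) \<Rightarrow> nat \<Rightarrow> real" where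
  "dem_inatt N t th lam ps sh k =
     (if k \<in> inatt_set N t th ps sh then (1 - lam) / real (card (inatt_set N t th ps sh)) else 0)"

definition profit :: "nat \<Rightarrow> real \<Rightarrow> real \<Rightarrow> real \<Rightarrow> real \<Rightarrow> real \<Rightarrow>
    (nat \<Rightarrow> real) \<Rightarrow> (nat \<Rightarrow> bool) \<Rightarrow> nat \<Rightarrow> real" where
  "profit N m t s th lam ps sh k =
     (eff_price t ps sh k - t - m) * (dem_att N t s lam ps sh k + dem_inatt N t th lam ps sh k)"

definition is_equilibrium :: "nat \<Rightarrow> real \<Rightarrow> real \<Rightarrow> real \<Rightarrow> real \<Rightarrow> real \<Rightarrow>
    (nat \<Rightarrow> real) \<Rightarrow> (nat \<Rightarrow> bool) \<Rightarrow> bool" where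
  "is_equilibrium N m t s th lam ps sh \<longleftrightarrow>
     (\<forall>k<N. \<forall>p'::real. \<forall>b::bool.
        profit N m t s th lam (ps(k := p')) (sh(k := b)) k \<le> profit N m t s th lam ps sh k)"

end

theory Submission
  imports Defs
begin

lemma notin_argmins: "j < N \<Longrightarrow> f j < f k \<Longrightarrow> k \<notin> argmins N f"
  unfolding argmins_def by force

lemma att_sub: "att_set N t s ps sh \<subseteq> argmins N (att_cost t s ps sh)"
  unfolding att_set_def Let_def by auto

lemma dem_att_nn: "0 < lam \<Longrightarrow> dem_att N t s lam ps sh k \<ge> 0"
  unfolding dem_att_def by auto

lemma dem_inatt_nn: "lam < 1 \<Longrightarrow> dem_inatt N t th lam ps sh k \<ge> 0"
  unfolding dem_inatt_def by auto

theorem lemma3: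
  fixes N :: nat and m t s th lam :: real
  assumes "t > 0" and "0 < lam" and "lam < 1" and "s \<ge> 0" and "th < 1" and "N \<ge> 4"
  shows "\<exists>S ps sh.
           S \<subseteq> {..<N} \<and> card S \<ge> 2 \<and> card ({..<N} - S) \<ge> 2 \<and>
           (\<forall>k\<in>S. ps k = m \<and> sh k) \<and>
           (\<forall>k\<in>{..<N} - S. ps k = m + t \<and> \<not> sh k) \<and>
           is_equilibrium N m t s th lam ps sh \<and>
           (\<Sum>k\<in>S. dem_inatt N t th lam ps sh k) = 1 - lam \<and>
           (\<Sum>k\<in>{..<N} - S. dem_att N t s lam ps sh k) = lam"
proof -
  define S where "S = {0::nat, 1}"
  define ps where "ps = (\<lambda>k::nat. if k < 2 then m else m + t)"
  define sh where "sh = (\<lambda>k::nat. k < 2)"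
  have thlt: "th * t < t" using assms by simp
  have compl: "{..<N} - S = {2..<N}" unfolding S_def by auto
  have cS: "card S = 2" unfolding S_def by simp
  have cC: "card ({..<N} - S) \<ge> 2" unfolding compl using assms by simp
  have inS: "inatt_set N t th ps sh = S"
  proof
    show "inatt_set N t th ps sh \<subseteq> S"
    proof
      fix k assume "k \<in> inatt_set N t th ps sh"
      then have "k < N" "inatt_cost t th ps sh k \<le> inatt_cost t th ps sh 0"
        unfolding inatt_set_def argmins_def using assms by auto
      then show "k \<in> S" using thlt unfolding inatt_cost_def ps_def sh_def S_def
        by (cases "k < 2") auto
    qed
    show "S \<subseteq> inatt_set N t th ps sh"
      unfolding inatt_set_def argmins_def inatt_cost_def ps_def sh_def S_def
      using assms thlt by auto
  qed
  have attS: "att_set N t s ps sh = {..<N} - S"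
  proof -
    have "\<forall>k\<in>argmins N (att_cost t s ps sh). \<not> sh k \<longleftrightarrow> k \<in> {..<N} - S"
      unfolding argmins_def S_def sh_def by auto
    moreover have "{..<N} - S \<subseteq> argmins N (att_cost t s ps sh)"
      unfolding argmins_def att_cost_def eff_price_def surcharge_def ps_def sh_def S_def
      using assms by auto
    moreover have "2 \<in> {..<N} - S" unfolding S_def using assms by auto
    moreover have "2 \<in> argmins N (att_cost t s ps sh)" "\<not> sh 2"
      using calculation by (auto simp: sh_def)
    ultimately have "att_set N t s ps sh = {k \<in> argmins N (att_cost t s ps sh). \<not> sh k}"
      unfolding att_set_def Let_def by auto
    also have "\<dots> = {..<N} - S" using \<open>\<forall>k\<in>argmins N (att_cost t s ps sh). \<not> sh k \<longleftrightarrow> k \<in> {..<N} - S\<close>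
      \<open>{..<N} - S \<subseteq> argmins N (att_cost t s ps sh)\<close> by blast
    finally show ?thesis .
  qed
  have sum1: "(\<Sum>k\<in>S. dem_inatt N t th lam ps sh k) = 1 - lam"
    unfolding dem_inatt_def inS cS by (simp add: S_def)
  have sum2: "(\<Sum>k\<in>{..<N} - S. dem_att N t s lam ps sh k) = lam"
  proof -
    have "(\<Sum>k\<in>{..<N} - S. dem_att N t s lam ps sh k) = (\<Sum>k\<in>{..<N} - S. lam / real (card ({..<N} - S)))"
      unfolding dem_att_def attS by simp
    also have "\<dots> = real (card ({..<N} - S)) * (lam / real (card ({..<N} - S)))"
      by (rule sum_constant)
    also have "\<dots> = lam" proof -
      have "real (card ({..<N} - S)) \<noteq> 0" using cC by linarith
      moreover have "\<And>c::real. c \<noteq> 0 \<Longrightarrow> c * (lam / c) = lam" by simp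
      ultimately show ?thesis by blast
    qed
    finally show ?thesis .
  qed
  have eq: "is_equilibrium N m t s th lam ps sh"
    unfolding is_equilibrium_def
  proof (intro allI impI)
    fix k p' b assume kN: "k < N"
    define ps2 where "ps2 = ps(k := p')"
    define sh2 where "sh2 = sh(k := b)"
    have p0: "profit N m t s th lam ps sh k = 0"
      unfolding profit_def eff_price_def surcharge_def ps_def sh_def by simp
    define mg where "mg = eff_price t ps2 sh2 k - t - m"
    have pr: "profit N m t s th lam ps2 sh2 k = mg * (dem_att N t s lam ps2 sh2 k + dem_inatt N t th lam ps2 sh2 k)"
      unfolding profit_def mg_def by simp
    have nn: "dem_att N t s lam ps2 sh2 k + dem_inatt N t th lam ps2 sh2 k \<ge> 0"
      using dem_att_nn[OF assms(2)] dem_inatt_nn[OF assms(3)] by (simp add: add_nonneg_nonneg)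
    show "profit N m t s th lam ps2 sh2 k \<le> profit N m t s th lam ps sh k"
    proof (cases "mg \<le> 0")
      case True
      then show ?thesis unfolding p0 pr using nn by (simp add: mult_nonpos_nonneg)
    next
      case False
      define j1 where "j1 = (if k = 0 then 1 else (0::nat))"
      define j2 where "j2 = (if k = 2 then 3 else (2::nat))"
      have j1: "j1 < N" "j1 \<noteq> k" "ps2 j1 = m" "sh2 j1"
        unfolding j1_def ps2_def sh2_def ps_def sh_def using assms by auto
      have j2: "j2 < N" "j2 \<noteq> k" "ps2 j2 = m + t" "\<not> sh2 j2"
        unfolding j2_def ps2_def sh2_def ps_def sh_def using assms by auto
      have k2: "ps2 k = p'" "sh2 k = b" unfolding ps2_def sh2_def by auto
      have c1: "inatt_cost t th ps2 sh2 j1 < inatt_cost t th ps2 sh2 k"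
        using False thlt j1 k2 unfolding inatt_cost_def mg_def eff_price_def surcharge_def
        by (cases b) auto
      have c2: "att_cost t s ps2 sh2 j2 < att_cost t s ps2 sh2 k"
        using False assms j2 k2 unfolding att_cost_def mg_def eff_price_def surcharge_def
        by (cases b) auto
      have "k \<notin> inatt_set N t th ps2 sh2"
        unfolding inatt_set_def using notin_argmins[OF j1(1) c1] .
      moreover have "k \<notin> att_set N t s ps2 sh2"
        using notin_argmins[OF j2(1) c2] att_sub by blast
      ultimately show ?thesis unfolding p0 pr dem_att_def dem_inatt_def by simp
    qed
  qed
  show ?thesis
    apply (rule exI[of _ S], rule exI[of _ ps], rule exI[of _ sh])
    using cS cC eq sum1 sum2 assms unfolding S_def ps_def sh_def
    by auto
qed

end
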